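(* (Setting as in the context.) Let $\tau>0$ and let $\{(u^k,y^k,v^k,z^k,x^k)\}$ be generated by Algorithm SCB-SPADMM. Then for every $k\ge0$, $(u^{k+1},y^{k+1},v^{k+1},z^{k+1},x^{k+1})$ can be generated exactly by $$(u^{k+1},y^{k+1})=\operatorname{argmin}_{u,y}\ \mathcal L_\sigma(u,y,v^k,z^k;x^k)+\tfrac\sigma2\|(u,y_{\le p-1})-(u^k,y^k_{\le p-1})\|^2_{\widehat{\mathcal T}_{f_p}}+\tfrac\sigma2\|y_p-y_p^k\|^2_{\mathcal T_{\theta_p}},$$ $$(v^{k+1},z^{k+1})=\operatorname{argmin}_{v,z}\ \mathcal L_\sigma(u^{k+1},y^{k+1},v,z;x^k)+\tfrac\sigma2\|(v,z_{\le q-1})-(v^k,z^k_{\le q-1})\|^2_{\widehat{\mathcal T}_{g_q}}+\tfrac\sigma2\|z_q-z_q^k\|^2_{\mathcal T_{\varphi_q}},$$ $$x^{k+1}=x^k+\tau\sigma(\mathcal F^*u^{k+1}+\mathcal A^*y^{k+1}+\mathcal G^*v^{k+1}+\mathcal B^*z^{k+1}-c).$$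
   Context: Let $p,q\ge1$ be integers, $\mathcal U,\mathcal V,\mathcal X,\mathcal Y_i,\mathcal Z_j$ real finite-dimensional Euclidean spaces, $\mathcal Y=\prod_i\mathcal Y_i$, $\mathcal Z=\prod_j\mathcal Z_j$; $f,g$ closed proper convex on $\mathcal U,\mathcal V$; $\mathcal F:\mathcal X\to\mathcal U$, $\mathcal G:\mathcal X\to\mathcal V$, $\mathcal A_i:\mathcal X\to\mathcal Y_i$, $\mathcal B_j:\mathcal X\to\mathcal Z_j$ linear; $c\in\mathcal X$; $\theta_i(y_i)=\frac12\langle y_i,\mathcal P_iy_i\rangle-\langle b_i,y_i\rangle$, $\varphi_j(z_j)=\frac12\langle z_j,\mathcal Q_jz_j\rangle-\langle d_j,z_j\rangle$ with $\mathcal P_i,\mathcal Q_j$ self-adjoint positive semidefinite. $\mathcal A^*y=\sum_i\mathcal A_i^*y_i$, $\mathcal B^*z=\sum_j\mathcal B_j^*z_j$, $\Gamma(u,y,v,z)=\mathcal F^*u+\mathcal A^*y+\mathcal G^*v+\mathcal B^*z-c$, $\sigma>0$, $\mathcal L_\sigma(u,y,v,z;x)=f(u)+\sum\theta_i(y_i)+g(v)+\sum\varphi_j(z_j)+\langle x,\Gamma\rangle+\frac\sigma2\|\Gamma\|^2$. $\mathcal E_{\theta_i}\succ0$ self-adjoint with $\mathcal E_{\theta_i}\succeq\sigma^{-1}\mathcal P_i+\mathcal A_i\mathcal A_i^*$, $\mathcal T_{\theta_i}:=\mathcal E_{\theta_i}-\sigma^{-1}\mathcal P_i-\mathcal A_i\mathcal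 A_i^*$; $\mathcal E_{\varphi_j}\succ0$ self-adjoint with $\mathcal E_{\varphi_j}\succeq\sigma^{-1}\mathcal Q_j+\mathcal B_j\mathcal B_j^*$, $\mathcal T_{\varphi_j}:=\mathcal E_{\varphi_j}-\sigma^{-1}\mathcal Q_j-\mathcal B_j\mathcal B_j^*$. $\mathcal T_f,\mathcal T_g$ self-adjoint positive semidefinite on $\mathcal U,\mathcal V$. Notation $y_{\le i},y_{\ge i},z_{\le j},z_{\ge j}$ for sub-tuples (empty if out of range), $\|w\|^2_{\mathcal T}=\langle w,\mathcal Tw\rangle$. $\mathcal F_1:=\mathcal F$, $\mathcal F_{i+1}x:=(\mathcal Fx,\mathcal A_1x,\dots,\mathcal A_ix)$; $\widehat{\mathcal T}_{f_1}:=\mathcal T_f+\mathcal F_1\mathcal A_1^*\mathcal E_{\theta_1}^{-1}\mathcal A_1\mathcal F_1^*$, $\widehat{\mathcal T}_{f_i}:=\mathrm{diag}(\widehat{\mathcal T}_{f_{i-1}},\mathcal T_{\theta_{i-1}})+\mathcal F_i\mathcal A_i^*\mathcal E_{\theta_i}^{-1}\mathcal A_i\mathcal F_i^*$ ($i=2,\dots,p$). Analogously $\mathcal G_1:=\mathcal G$, $\mathcal G_{j+1}x:=(\mathcal Gx,\mathcal B_1x,\dots,\mathcal B_jx)$; $\widehat{\mathcal T}_{g_1}:=\mathcal T_g+\mathcal G_1\mathcal B_1^*\mathcal E_{\varphi_1}^{-1}\mathcal B_1\mathcal G_1^*$, $\widehat{\mathcal T}_{g_j}:=\mathrm{diag}(\widehat{\mathcal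 T}_{g_{j-1}},\mathcal T_{\varphi_{j-1}})+\mathcal G_j\mathcal B_j^*\mathcal E_{\varphi_j}^{-1}\mathcal B_j\mathcal G_j^*$ ($j=2,\dots,q$). Algorithm SCB-SPADMM: choose $(u^0,y^0,v^0,z^0,x^0)\in\mathrm{dom}f\times\mathcal Y\times\mathrm{dom}g\times\mathcal Z\times\mathcal X$; for $k=0,1,\dots$: (1) for $i=p,\dots,1$, $\bar y_i^k=\operatorname{argmin}_{y_i}\mathcal L_\sigma(u^k,(y^k_{\le i-1},y_i,\bar y^k_{\ge i+1}),v^k,z^k;x^k)+\frac\sigma2\|y_i-y_i^k\|^2_{\mathcal T_{\theta_i}}$, then $u^{k+1}=\operatorname{argmin}_u\mathcal L_\sigma(u,\bar y^k,v^k,z^k;x^k)+\frac\sigma2\|u-u^k\|^2_{\mathcal T_f}$; (2) for $i=1,\dots,p$, $y_i^{k+1}=\operatorname{argmin}_{y_i}\mathcal L_\sigma(u^{k+1},(y^{k+1}_{\le i-1},y_i,\bar y^k_{\ge i+1}),v^k,z^k;x^k)+\frac\sigma2\|y_i-y_i^k\|^2_{\mathcal T_{\theta_i}}$; (3) for $j=q,\dots,1$, $\bar z_j^k=\operatorname{argmin}_{z_j}\mathcal L_\sigma(u^{k+1},y^{k+1},v^k,(z^k_{\le j-1},z_j,\bar z^k_{\ge j+1});x^k)+\frac\sigma2\|z_j-z_j^k\|^2_{\mathcal T_{\varphi_j}}$, then $v^{k+1}=\operatorname{argmin}_v\mathcal L_\sigma(u^{k+1},y^{k+1},v,\bar z^k;x^k)+\frac\sigma2\|v-v^k\|^2_{\mathcal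 T_g}$; (4) for $j=1,\dots,q$, $z_j^{k+1}=\operatorname{argmin}_{z_j}\mathcal L_\sigma(u^{k+1},y^{k+1},v^{k+1},(z^{k+1}_{\le j-1},z_j,\bar z^k_{\ge j+1});x^k)+\frac\sigma2\|z_j-z_j^k\|^2_{\mathcal T_{\varphi_j}}$; (5) $x^{k+1}=x^k+\tau\sigma(\mathcal F^*u^{k+1}+\mathcal A^*y^{k+1}+\mathcal G^*v^{k+1}+\mathcal B^*z^{k+1}-c)$. *)

theory Defs
  imports "HOL-Analysis.Analysis"
begin

text \<open>Closed proper convex function, represented by its finite values on its
  effective domain D (the function is +infinity outside D): D nonempty convex,
  f convex on D, epigraph closed.\<close>
definition closed_proper_convex :: "('a::real_normed_vector \<Rightarrow> real) \<Rightarrow> 'a set \<Rightarrow> bool" where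
  "closed_proper_convex f D \<longleftrightarrow> D \<noteq> {} \<and> convex D \<and> convex_on D f
      \<and> closed {(w, t). w \<in> D \<and> f w \<le> t}"

definition sa_psd_on :: "'a::real_inner set \<Rightarrow> ('a \<Rightarrow> 'a) \<Rightarrow> bool" where
  "sa_psd_on S T \<longleftrightarrow> linear T \<and> (\<forall>a\<in>S. T a \<in> S)
      \<and> (\<forall>a\<in>S. \<forall>b\<in>S. T a \<bullet> b = a \<bullet> T b) \<and> (\<forall>a\<in>S. 0 \<le> a \<bullet> T a)"

definition qn :: "('a::real_inner \<Rightarrow> 'a) \<Rightarrow> 'a \<Rightarrow> real" where
  "qn T w = w \<bullet> T w"

definition quadlin :: "('a::real_inner \<Rightarrow> 'a) \<Rightarrow> 'a \<Rightarrow> 'a \<Rightarrow> real" where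
  "quadlin P b w = 1/2 * (w \<bullet> P w) - b \<bullet> w"

definition Gam :: "('x::euclidean_space \<Rightarrow> 'u::euclidean_space) \<Rightarrow> ('x \<Rightarrow> 'v::euclidean_space)
   \<Rightarrow> (nat \<Rightarrow> 'x \<Rightarrow> 'y::euclidean_space) \<Rightarrow> (nat \<Rightarrow> 'x \<Rightarrow> 'z::euclidean_space) \<Rightarrow> 'x
   \<Rightarrow> nat \<Rightarrow> nat \<Rightarrow> 'u \<Rightarrow> (nat \<Rightarrow> 'y) \<Rightarrow> 'v \<Rightarrow> (nat \<Rightarrow> 'z) \<Rightarrow> 'x" where
  "Gam F G A B c p q u y v z =
     adjoint F u + (\<Sum>i\<in>{1..p}. adjoint (A i) (y i)) + adjoint G v
       + (\<Sum>j\<in>{1..q}. adjoint (B j) (z j)) - c"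

text \<open>Augmented Lagrangian L_sigma(u,y,v,z;x) (for u in dom f, v in dom g).\<close>
definition Lagr :: "real \<Rightarrow> ('u::euclidean_space \<Rightarrow> real) \<Rightarrow> ('v::euclidean_space \<Rightarrow> real)
   \<Rightarrow> ('x::euclidean_space \<Rightarrow> 'u) \<Rightarrow> ('x \<Rightarrow> 'v)
   \<Rightarrow> (nat \<Rightarrow> 'x \<Rightarrow> 'y::euclidean_space) \<Rightarrow> (nat \<Rightarrow> 'x \<Rightarrow> 'z::euclidean_space) \<Rightarrow> 'x
   \<Rightarrow> (nat \<Rightarrow> 'y \<Rightarrow> 'y) \<Rightarrow> (nat \<Rightarrow> 'y) \<Rightarrow> (nat \<Rightarrow> 'z \<Rightarrow> 'z) \<Rightarrow> (nat \<Rightarrow> 'z)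
   \<Rightarrow> nat \<Rightarrow> nat \<Rightarrow> 'u \<Rightarrow> (nat \<Rightarrow> 'y) \<Rightarrow> 'v \<Rightarrow> (nat \<Rightarrow> 'z) \<Rightarrow> 'x \<Rightarrow> real" where
  "Lagr \<sigma> f g F G A B c P b Q d p q u y v z x =
     f u + (\<Sum>i\<in>{1..p}. quadlin (P i) (b i) (y i)) + g v + (\<Sum>j\<in>{1..q}. quadlin (Q j) (d j) (z j))
       + x \<bullet> Gam F G A B c p q u y v z + \<sigma> / 2 * (norm (Gam F G A B c p q u y v z))\<^sup>2"

definition blk :: "(nat \<Rightarrow> 'a) \<Rightarrow> nat \<Rightarrow> 'a \<Rightarrow> (nat \<Rightarrow> 'a) \<Rightarrow> nat \<Rightarrow> 'a" where
  "blk y i w ybar = (\<lambda>l. if l < i then y l else if l = i then w else ybar l)"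

definition Tth :: "real \<Rightarrow> (nat \<Rightarrow> 'y::euclidean_space \<Rightarrow> 'y) \<Rightarrow> (nat \<Rightarrow> 'y \<Rightarrow> 'y)
   \<Rightarrow> (nat \<Rightarrow> 'x::euclidean_space \<Rightarrow> 'y) \<Rightarrow> nat \<Rightarrow> 'y \<Rightarrow> 'y" where
  "Tth \<sigma> E P A i w = E i w - (1/\<sigma>) *\<^sub>R P i w - A i (adjoint (A i) w)"

text \<open>Elements of U x Y_1 x ... x Y_{i-1} are pairs (u, w) with w j used for 1 <= j < i.
  F_i x = (F x, A_1 x, ..., A_{i-1} x) and its adjoint.\<close>
definition Fi :: "('x::euclidean_space \<Rightarrow> 'u::euclidean_space) \<Rightarrow> (nat \<Rightarrow> 'x \<Rightarrow> 'y::euclidean_space)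
   \<Rightarrow> nat \<Rightarrow> 'x \<Rightarrow> 'u \<times> (nat \<Rightarrow> 'y)" where
  "Fi F A i x = (F x, \<lambda>j. if 1 \<le> j \<and> j < i then A j x else 0)"

definition Fi_adj :: "('x::euclidean_space \<Rightarrow> 'u::euclidean_space) \<Rightarrow> (nat \<Rightarrow> 'x \<Rightarrow> 'y::euclidean_space)
   \<Rightarrow> nat \<Rightarrow> 'u \<times> (nat \<Rightarrow> 'y) \<Rightarrow> 'x" where
  "Fi_adj F A i uw = adjoint F (fst uw) + (\<Sum>j\<in>{1..<i}. adjoint (A j) (snd uw j))"

definition padd :: "'u::real_vector \<times> (nat \<Rightarrow> 'y::real_vector) \<Rightarrow> 'u \<times> (nat \<Rightarrow> 'y) \<Rightarrow> 'u \<times> (nat \<Rightarrow> 'y)" where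
  "padd a b = (fst a + fst b, \<lambda>j. snd a j + snd b j)"

text \<open>The term F_i A_i^* E_i^{-1} A_i F_i^* applied to uw; E_i^{-1} is the inverse of E_i on Y_i.\<close>
definition sgscorr :: "('x::euclidean_space \<Rightarrow> 'u::euclidean_space) \<Rightarrow> (nat \<Rightarrow> 'x \<Rightarrow> 'y::euclidean_space)
   \<Rightarrow> (nat \<Rightarrow> 'y \<Rightarrow> 'y) \<Rightarrow> (nat \<Rightarrow> 'y set) \<Rightarrow> nat \<Rightarrow> 'u \<times> (nat \<Rightarrow> 'y) \<Rightarrow> 'u \<times> (nat \<Rightarrow> 'y)" where
  "sgscorr F A E Y i uw = Fi F A i (adjoint (A i) (inv_into (Y i) (E i) (A i (Fi_adj F A i uw))))"

text \<open>hat T_{f_i} on U x Y_1 x ... x Y_{i-1}: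
  hatT 1 = T_f + F_1 A_1^* E_1^{-1} A_1 F_1^*,
  hatT i = diag(hatT (i-1), T_theta_{i-1}) + F_i A_i^* E_i^{-1} A_i F_i^*.\<close>
fun hatT :: "real \<Rightarrow> ('u::euclidean_space \<Rightarrow> 'u) \<Rightarrow> ('x::euclidean_space \<Rightarrow> 'u)
   \<Rightarrow> (nat \<Rightarrow> 'x \<Rightarrow> 'y::euclidean_space) \<Rightarrow> (nat \<Rightarrow> 'y \<Rightarrow> 'y) \<Rightarrow> (nat \<Rightarrow> 'y \<Rightarrow> 'y)
   \<Rightarrow> (nat \<Rightarrow> 'y set) \<Rightarrow> nat \<Rightarrow> 'u \<times> (nat \<Rightarrow> 'y) \<Rightarrow> 'u \<times> (nat \<Rightarrow> 'y)" where
  "hatT \<sigma> Tf F A P E Y 0 uw = uw"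
| "hatT \<sigma> Tf F A P E Y (Suc 0) uw = padd (Tf (fst uw), \<lambda>j. 0) (sgscorr F A E Y 1 uw)"
| "hatT \<sigma> Tf F A P E Y (Suc (Suc n)) uw =
     padd (let r = hatT \<sigma> Tf F A P E Y (Suc n) (fst uw, \<lambda>j. if j < Suc n then snd uw j else 0)
           in (fst r, (snd r)(Suc n := Tth \<sigma> E P A (Suc n) (snd uw (Suc n)))))
          (sgscorr F A E Y (Suc (Suc n)) uw)"

definition hatqf :: "real \<Rightarrow> ('u::euclidean_space \<Rightarrow> 'u) \<Rightarrow> ('x::euclidean_space \<Rightarrow> 'u)
   \<Rightarrow> (nat \<Rightarrow> 'x \<Rightarrow> 'y::euclidean_space) \<Rightarrow> (nat \<Rightarrow> 'y \<Rightarrow> 'y) \<Rightarrow> (nat \<Rightarrow> 'y \<Rightarrow> 'y)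
   \<Rightarrow> (nat \<Rightarrow> 'y set) \<Rightarrow> nat \<Rightarrow> 'u \<times> (nat \<Rightarrow> 'y) \<Rightarrow> real" where
  "hatqf \<sigma> Tf F A P E Y i uw =
     (let r = hatT \<sigma> Tf F A P E Y i uw in
        fst uw \<bullet> fst r + (\<Sum>j\<in>{1..<i}. snd uw j \<bullet> snd r j))"

end

theory Submission
  imports Defs
begin


lemma surj_sub:
  fixes E :: "'a::euclidean_space \<Rightarrow> 'a"
  assumes "linear E" "subspace Y" "E ` Y \<subseteq> Y" "inj_on E Y"
  shows "E ` Y = Y"
proof -
  have "span Y = Y" using assms(2) by (simp add: span_eq_iff)
  hence "dim (E ` Y) = dim Y" using dim_image_eq[of E Y] assms by metis
  moreover have "subspace (E ` Y)" by (rule linear_subspace_image[OF assms(1,2)])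
  ultimately show ?thesis using subspace_dim_equal[of "E ` Y" Y] assms by simp
qed

lemma quad_line:
  assumes "sa_psd_on Yi PP" "a \<in> Yi" "h \<in> Yi"
  shows "quadlin PP bi (a + t *\<^sub>R h) = quadlin PP bi a + t * ((PP a - bi) \<bullet> h) + t\<^sup>2 * (1/2 * (h \<bullet> PP h))"
proof -
  have lin: "linear PP" and sa: "PP a \<bullet> h = a \<bullet> PP h" using assms unfolding sa_psd_on_def by auto
  have "PP (a + t *\<^sub>R h) = PP a + t *\<^sub>R PP h" using lin by (simp add: linear_add linear_scale)
  thus ?thesis using sa unfolding quadlin_def
    by (simp add: inner_add_left inner_add_right inner_diff_left power2_eq_square algebra_simps inner_commute[of h "PP a"])
qed

lemma qn_line:
  assumes "sa_psd_on Yi T" "a \<in> Yi" "h \<in> Yi"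
  shows "qn T (a + t *\<^sub>R h) = qn T a + t * (2 * (T a \<bullet> h)) + t\<^sup>2 * qn T h"
proof -
  have lin: "linear T" and sa: "T a \<bullet> h = a \<bullet> T h" using assms unfolding sa_psd_on_def by auto
  have "T (a + t *\<^sub>R h) = T a + t *\<^sub>R T h" using lin by (simp add: linear_add linear_scale)
  thus ?thesis using sa unfolding qn_def
    by (simp add: inner_add_left inner_add_right power2_eq_square algebra_simps inner_commute[of h "T a"])
qed

lemma qn_nonneg: "sa_psd_on Yi T \<Longrightarrow> a \<in> Yi \<Longrightarrow> 0 \<le> qn T a"
  unfolding sa_psd_on_def qn_def by auto

lemma fo_lemma:
  fixes D C :: real
  assumes "\<And>t. 0 < t \<Longrightarrow> t \<le> 1 \<Longrightarrow> 0 \<le> t * D + t\<^sup>2 * C"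
  shows "0 \<le> D"
proof (rule ccontr)
  assume "\<not> 0 \<le> D"
  hence D: "D < 0" by simp
  define M where "M = 2 * (\<bar>C\<bar> + 1)"
  have M: "0 < M" by (simp add: M_def add_nonneg_pos)
  define t where "t = min 1 (- D / M)"
  have t0: "0 < t" using D M by (simp add: t_def divide_neg_pos)
  have t1: "t \<le> 1" by (simp add: t_def)
  have le: "t \<le> - D / M" by (simp add: t_def)
  have "t * M \<le> (- D / M) * M" by (rule mult_right_mono[OF le]) (use M in auto)
  also have "\<dots> = - D" using M by simp
  finally have tM: "t * M \<le> - D" .
  hence tc: "t * \<bar>C\<bar> \<le> - D / 2" using t0 unfolding M_def by (simp add: algebra_simps)
  have "t * D + t\<^sup>2 * C \<le> t * D + t * (t * \<bar>C\<bar>)"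
    using t0 by (simp add: power2_eq_square mult_left_mono abs_ge_self)
  also have "\<dots> \<le> t * D + t * (- D / 2)" using mult_left_mono[OF tc, of t] t0 by (simp add: algebra_simps)
  also have "\<dots> < 0" using t0 D by (simp add: algebra_simps mult_neg_pos)
  finally show False using assms[OF t0 t1] by simp
qed



locale sgs =
  fixes f :: "'u::euclidean_space \<Rightarrow> real" and domf :: "'u set"
    and F :: "'x::euclidean_space \<Rightarrow> 'u" and A :: "nat \<Rightarrow> 'x \<Rightarrow> 'y::euclidean_space"
    and Y :: "nat \<Rightarrow> 'y set" and P E :: "nat \<Rightarrow> 'y \<Rightarrow> 'y" and b :: "nat \<Rightarrow> 'y"
    and Tf :: "'u \<Rightarrow> 'u" and p :: nat and \<sigma> :: real and S :: 'x and K :: real and x :: 'x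
    and Lam :: "'u \<Rightarrow> (nat \<Rightarrow> 'y) \<Rightarrow> real"
    and u0 u1 :: 'u and y0 y1 yb :: "nat \<Rightarrow> 'y"
  assumes p1: "p \<ge> 1" and sig: "\<sigma> > 0"
    and domconv: "convex domf" and fconv: "convex_on domf f"
    and linF: "linear F" and Ysub: "\<And>i. i \<in> {1..p} \<Longrightarrow> subspace (Y i)"
    and linA: "\<And>i. i \<in> {1..p} \<Longrightarrow> linear (A i)" and AY: "\<And>i w. i \<in> {1..p} \<Longrightarrow> A i w \<in> Y i"
    and Ppsd: "\<And>i. i \<in> {1..p} \<Longrightarrow> sa_psd_on (Y i) (P i)"
    and Esa: "\<And>i. i \<in> {1..p} \<Longrightarrow> sa_psd_on (Y i) (E i)"
    and Epos: "\<And>i a. i \<in> {1..p} \<Longrightarrow> a \<in> Y i \<Longrightarrow> a \<noteq> 0 \<Longrightarrow> 0 < a \<bullet> E i a"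
    and Ege: "\<And>i a. i \<in> {1..p} \<Longrightarrow> a \<in> Y i \<Longrightarrow>
                a \<bullet> ((1/\<sigma>) *\<^sub>R P i a + A i (adjoint (A i) a)) \<le> a \<bullet> E i a"
    and Tfpsd: "sa_psd_on UNIV Tf"
    and Lam_def: "\<And>u y. Lam u y = f u + (\<Sum>i\<in>{1..p}. quadlin (P i) (b i) (y i)) + K
        + x \<bullet> (adjoint F u + (\<Sum>i\<in>{1..p}. adjoint (A i) (y i)) + S)
        + \<sigma> / 2 * (norm (adjoint F u + (\<Sum>i\<in>{1..p}. adjoint (A i) (y i)) + S))\<^sup>2"
    and y0Y: "\<And>i. i \<in> {1..p} \<Longrightarrow> y0 i \<in> Y i"
    and step_ybar: "\<And>i. i \<in> {1..p} \<Longrightarrow> yb i \<in> Y i \<and> (\<forall>w\<in>Y i.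
         Lam u0 (blk y0 i (yb i) yb) + \<sigma>/2 * qn (Tth \<sigma> E P A i) (yb i - y0 i)
         \<le> Lam u0 (blk y0 i w yb) + \<sigma>/2 * qn (Tth \<sigma> E P A i) (w - y0 i))"
    and step_u: "u1 \<in> domf \<and> (\<forall>w\<in>domf.
         Lam u1 yb + \<sigma>/2 * qn Tf (u1 - u0) \<le> Lam w yb + \<sigma>/2 * qn Tf (w - u0))"
    and step_y: "\<And>i. i \<in> {1..p} \<Longrightarrow> y1 i \<in> Y i \<and> (\<forall>w\<in>Y i.
         Lam u1 (blk y1 i (y1 i) yb) + \<sigma>/2 * qn (Tth \<sigma> E P A i) (y1 i - y0 i)
         \<le> Lam u1 (blk y1 i w yb) + \<sigma>/2 * qn (Tth \<sigma> E P A i) (w - y0 i))"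
begin

definition "Gm u y = adjoint F u + (\<Sum>i\<in>{1..p}. adjoint (A i) (y i)) + S"
definition "rr u y = x + \<sigma> *\<^sub>R Gm u y"
definition "gam du dy = adjoint F du + (\<Sum>i\<in>{1..p}. adjoint (A i) (dy i))"
definition "Dl u y du dy = (\<Sum>i\<in>{1..p}. (P i (y i) - b i) \<bullet> dy i) + rr u y \<bullet> gam du dy"
definition "Cl du dy = (\<Sum>i\<in>{1..p}. 1/2 * (dy i \<bullet> P i (dy i))) + \<sigma>/2 * (norm (gam du dy))\<^sup>2"

lemma Lam_Gm: "Lam u y = f u + (\<Sum>i\<in>{1..p}. quadlin (P i) (b i) (y i)) + K + x \<bullet> Gm u y + \<sigma>/2 * (norm (Gm u y))\<^sup>2"
  by (simp add: Lam_def Gm_def)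

lemma linFa: "linear (adjoint F)" using adjoint_linear[OF linF] .
lemma linAa: "i \<in> {1..p} \<Longrightarrow> linear (adjoint (A i))" using adjoint_linear[OF linA] .

lemma Gm_line: "Gm (u + t *\<^sub>R du) (\<lambda>i. y i + t *\<^sub>R dy i) = Gm u y + t *\<^sub>R gam du dy"
proof -
  have "(\<Sum>i\<in>{1..p}. adjoint (A i) (y i + t *\<^sub>R dy i)) = (\<Sum>i\<in>{1..p}. adjoint (A i) (y i) + t *\<^sub>R adjoint (A i) (dy i))"
    by (rule sum.cong) (auto simp: linear_add[OF linAa] linear_scale[OF linAa])
  thus ?thesis unfolding Gm_def gam_def
    by (simp add: linear_add[OF linFa] linear_scale[OF linFa] sum.distrib scaleR_sum_right algebra_simps)
qed

lemma lam_line: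
  assumes "\<forall>i\<in>{1..p}. y i \<in> Y i \<and> dy i \<in> Y i"
  shows "Lam (u + t *\<^sub>R du) (\<lambda>i. y i + t *\<^sub>R dy i) = Lam u y + (f (u + t *\<^sub>R du) - f u) + t * Dl u y du dy + t\<^sup>2 * Cl du dy"
proof -
  have Q: "(\<Sum>i\<in>{1..p}. quadlin (P i) (b i) (y i + t *\<^sub>R dy i)) = (\<Sum>i\<in>{1..p}. quadlin (P i) (b i) (y i))
     + t * (\<Sum>i\<in>{1..p}. (P i (y i) - b i) \<bullet> dy i) + t\<^sup>2 * (\<Sum>i\<in>{1..p}. 1/2 * (dy i \<bullet> P i (dy i)))"
  proof -
    have "(\<Sum>i\<in>{1..p}. quadlin (P i) (b i) (y i + t *\<^sub>R dy i)) = (\<Sum>i\<in>{1..p}. quadlin (P i) (b i) (y i)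
     + t * ((P i (y i) - b i) \<bullet> dy i) + t\<^sup>2 * (1/2 * (dy i \<bullet> P i (dy i))))"
      proof (rule sum.cong)
      fix i assume i: "i \<in> {1..p}"
      show "quadlin (P i) (b i) (y i + t *\<^sub>R dy i) = quadlin (P i) (b i) (y i)
     + t * ((P i (y i) - b i) \<bullet> dy i) + t\<^sup>2 * (1/2 * (dy i \<bullet> P i (dy i)))"
        using quad_line[OF Ppsd[OF i]] assms i by blast
    qed simp
    thus ?thesis by (simp add: sum.distrib sum_distrib_left)
  qed
  have N: "(norm (Gm u y + t *\<^sub>R gam du dy))\<^sup>2 = (norm (Gm u y))\<^sup>2 + t * (2 * (Gm u y \<bullet> gam du dy)) + t\<^sup>2 * (norm (gam du dy))\<^sup>2"
    unfolding power2_norm_eq_inner by (simp add: inner_add_left inner_add_right algebra_simps power2_eq_square inner_commute)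
  show ?thesis unfolding Lam_Gm Gm_line Q Dl_def Cl_def rr_def N
    by (simp add: inner_add_left inner_add_right algebra_simps power2_eq_square)
qed

lemma Tth_sa: assumes i: "i \<in> {1..p}" shows "sa_psd_on (Y i) (Tth \<sigma> E P A i)"
proof -
  have lE: "linear (E i)" and lP: "linear (P i)" using Esa[OF i] Ppsd[OF i] unfolding sa_psd_on_def by auto
  have lA: "linear (A i)" and lAa: "linear (adjoint (A i))" using linA[OF i] linAa[OF i] by auto
  have lin: "linear (Tth \<sigma> E P A i)"
    unfolding linear_iff Tth_def
    by (simp add: linear_add[OF lE] linear_add[OF lP] linear_add[OF lA] linear_add[OF lAa]
        linear_scale[OF lE] linear_scale[OF lP] linear_scale[OF lA] linear_scale[OF lAa] algebra_simps)
  have sub: "subspace (Y i)" using Ysub[OF i] .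
  have inY: "\<forall>a\<in>Y i. Tth \<sigma> E P A i a \<in> Y i"
    using Esa[OF i] Ppsd[OF i] AY[OF i] sub unfolding sa_psd_on_def Tth_def
    by (auto intro!: subspace_diff subspace_scale)
  have sa: "\<forall>a\<in>Y i. \<forall>c\<in>Y i. Tth \<sigma> E P A i a \<bullet> c = a \<bullet> Tth \<sigma> E P A i c"
  proof (intro ballI)
    fix a c assume a: "a \<in> Y i" and c: "c \<in> Y i"
    have 1: "E i a \<bullet> c = a \<bullet> E i c" and 2: "P i a \<bullet> c = a \<bullet> P i c"
      using Esa[OF i] Ppsd[OF i] a c unfolding sa_psd_on_def by auto
    have 3: "A i (adjoint (A i) a) \<bullet> c = a \<bullet> A i (adjoint (A i) c)"
      using adjoint_works[OF lA, of "adjoint (A i) a" c] adjoint_works[OF lA, of "adjoint (A i) c" a]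
      by (simp add: inner_commute)
    show "Tth \<sigma> E P A i a \<bullet> c = a \<bullet> Tth \<sigma> E P A i c"
      unfolding Tth_def using 1 2 3 by (simp add: inner_diff_left inner_diff_right)
  qed
  have psd: "\<forall>a\<in>Y i. 0 \<le> a \<bullet> Tth \<sigma> E P A i a"
  proof
    fix a assume a: "a \<in> Y i"
    show "0 \<le> a \<bullet> Tth \<sigma> E P A i a" using Ege[OF i a]
      unfolding Tth_def by (simp add: inner_diff_right inner_add_right)
  qed
  show ?thesis unfolding sa_psd_on_def using lin inY sa psd by blast
qed

lemma Dl_single:
  assumes i: "i \<in> {1..p}"
  shows "Dl u y 0 (\<lambda>l. if l = i then h else 0) = (P i (y i) - b i) \<bullet> h + rr u y \<bullet> adjoint (A i) h"
proof -
  have 1: "(\<Sum>l\<in>{1..p}. (P l (y l) - b l) \<bullet> (if l = i then h else 0)) = (P i (y i) - b i) \<bullet> h"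
  proof -
    have "(\<Sum>l\<in>{1..p}. (P l (y l) - b l) \<bullet> (if l = i then h else 0)) = (\<Sum>l\<in>{1..p}. if l = i then (P i (y i) - b i) \<bullet> h else 0)"
      by (rule sum.cong) auto
    thus ?thesis using i by simp
  qed
  have 2: "(\<Sum>l\<in>{1..p}. adjoint (A l) (if l = i then h else 0)) = adjoint (A i) h"
  proof -
    have "(\<Sum>l\<in>{1..p}. adjoint (A l) (if l = i then h else 0)) = (\<Sum>l\<in>{1..p}. if l = i then adjoint (A i) h else 0)"
      by (rule sum.cong) (auto simp: linear_0[OF linAa])
    thus ?thesis using i by simp
  qed
  show ?thesis unfolding Dl_def gam_def 1 2 by (simp add: linear_0[OF linFa])
qed

lemma block_fo:
  assumes i: "i \<in> {1..p}" and cfgY: "\<forall>l\<in>{1..p}. cfg l \<in> Y l" and c0: "c0 \<in> Y i"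
    and opt: "\<forall>w\<in>Y i. Lam uu cfg + \<sigma>/2 * qn (Tth \<sigma> E P A i) (cfg i - c0)
        \<le> Lam uu (cfg(i := w)) + \<sigma>/2 * qn (Tth \<sigma> E P A i) (w - c0)"
  shows "\<forall>h\<in>Y i. (P i (cfg i) - b i) \<bullet> h + rr uu cfg \<bullet> adjoint (A i) h
             + \<sigma> * (Tth \<sigma> E P A i (cfg i - c0) \<bullet> h) = 0"
proof -
  define T where "T = Tth \<sigma> E P A i"
  have Tsa: "sa_psd_on (Y i) T" using Tth_sa[OF i] by (simp add: T_def)
  have sub: "subspace (Y i)" using Ysub[OF i] .
  define G where "G h = (P i (cfg i) - b i) \<bullet> h + rr uu cfg \<bullet> adjoint (A i) h + \<sigma> * (T (cfg i - c0) \<bullet> h)" for h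
  have pos: "0 \<le> G h" if h: "h \<in> Y i" for h
  proof (rule fo_lemma)
    fix t :: real assume t0: "0 < t" and t1: "t \<le> 1"
    define dy where "dy = (\<lambda>l. if l = i then h else (0::'y))"
    have wY: "cfg i + t *\<^sub>R h \<in> Y i" using cfgY i h sub by (auto intro!: subspace_add subspace_scale)
    have cfg_eq: "cfg(i := cfg i + t *\<^sub>R h) = (\<lambda>l. cfg l + t *\<^sub>R dy l)"
      by (auto simp: dy_def)
    have dyY: "\<forall>l\<in>{1..p}. cfg l \<in> Y l \<and> dy l \<in> Y l"
      using cfgY h sub by (auto simp: dy_def subspace_0 Ysub)
    have L: "Lam uu (cfg(i := cfg i + t *\<^sub>R h)) = Lam uu cfg + t * Dl uu cfg 0 dy + t\<^sup>2 * Cl 0 dy"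
      using lam_line[OF dyY, of uu t 0] unfolding cfg_eq by simp
    have D: "Dl uu cfg 0 dy = (P i (cfg i) - b i) \<bullet> h + rr uu cfg \<bullet> adjoint (A i) h"
      unfolding dy_def by (rule Dl_single[OF i])
    have cY: "cfg i - c0 \<in> Y i" using cfgY i c0 sub by (auto intro: subspace_diff)
    have Q: "qn T (cfg i + t *\<^sub>R h - c0) = qn T (cfg i - c0) + t * (2 * (T (cfg i - c0) \<bullet> h)) + t\<^sup>2 * qn T h"
      using qn_line[OF Tsa cY h, of t] by (simp add: algebra_simps)
    have "Lam uu cfg + \<sigma>/2 * qn T (cfg i - c0) \<le> Lam uu (cfg(i := cfg i + t *\<^sub>R h)) + \<sigma>/2 * qn T (cfg i + t *\<^sub>R h - c0)"
      using opt wY unfolding T_def by blast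
    hence "0 \<le> t * Dl uu cfg 0 dy + t\<^sup>2 * Cl 0 dy + \<sigma>/2 * (t * (2 * (T (cfg i - c0) \<bullet> h)) + t\<^sup>2 * qn T h)"
      unfolding L Q by (simp add: algebra_simps)
    thus "0 \<le> t * G h + t\<^sup>2 * (Cl 0 dy + \<sigma>/2 * qn T h)"
      unfolding G_def D[symmetric] by (simp add: algebra_simps)
  qed
  show ?thesis
  proof
    fix h assume h: "h \<in> Y i"
    have "-h \<in> Y i" using h sub by (simp add: subspace_neg)
    hence "0 \<le> G (-h)" by (rule pos)
    moreover have "G (-h) = - G h"
      unfolding G_def by (simp add: linear_neg[OF linAa[OF i]])
    ultimately have "G h = 0" using pos[OF h] by simp
    thus "(P i (cfg i) - b i) \<bullet> h + rr uu cfg \<bullet> adjoint (A i) h + \<sigma> * (Tth \<sigma> E P A i (cfg i - c0) \<bullet> h) = 0"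
      unfolding G_def T_def .
  qed
qed

lemma u_fo:
  assumes w: "w \<in> domf"
  shows "0 \<le> f w - f u1 + rr u1 yb \<bullet> adjoint F (w - u1) + \<sigma> * (Tf (u1 - u0) \<bullet> (w - u1))"
proof (rule fo_lemma)
  fix t :: real assume t0: "0 < t" and t1: "t \<le> 1"
  define d where "d = w - u1"
  have u1d: "u1 \<in> domf" using step_u by blast
  have wt_eq: "u1 + t *\<^sub>R d = (1 - t) *\<^sub>R u1 + t *\<^sub>R w" by (simp add: d_def algebra_simps)
  have wt: "u1 + t *\<^sub>R d \<in> domf" unfolding wt_eq
    using domconv u1d w t0 t1 by (simp add: convex_def)
  have fconvt: "f (u1 + t *\<^sub>R d) \<le> (1 - t) * f u1 + t * f w"
    unfolding wt_eq using convex_onD[OF fconv, of t u1 w] t0 t1 u1d w by simp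
  have ybY: "\<forall>i\<in>{1..p}. yb i \<in> Y i \<and> (0::'y) \<in> Y i" using step_ybar Ysub by (auto simp: subspace_0)
  have L: "Lam (u1 + t *\<^sub>R d) yb = Lam u1 yb + (f (u1 + t *\<^sub>R d) - f u1) + t * Dl u1 yb d (\<lambda>i. 0) + t\<^sup>2 * Cl d (\<lambda>i. 0)"
    using lam_line[OF ybY, of u1 t d] by simp
  have D: "Dl u1 yb d (\<lambda>i. 0) = rr u1 yb \<bullet> adjoint F d"
  proof -
    have "(\<Sum>i\<in>{1..p}. adjoint (A i) 0) = 0" by (rule sum.neutral) (simp add: linear_0[OF linAa])
    thus ?thesis unfolding Dl_def gam_def by simp
  qed
  have Q: "qn Tf (u1 + t *\<^sub>R d - u0) = qn Tf (u1 - u0) + t * (2 * (Tf (u1 - u0) \<bullet> d)) + t\<^sup>2 * qn Tf d"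
    using qn_line[OF Tfpsd, of "u1 - u0" d t] by (simp add: algebra_simps)
  have "Lam u1 yb + \<sigma>/2 * qn Tf (u1 - u0) \<le> Lam (u1 + t *\<^sub>R d) yb + \<sigma>/2 * qn Tf (u1 + t *\<^sub>R d - u0)"
    using step_u wt by blast
  hence "0 \<le> (f (u1 + t *\<^sub>R d) - f u1) + t * Dl u1 yb d (\<lambda>i. 0) + t\<^sup>2 * Cl d (\<lambda>i. 0)
      + \<sigma>/2 * (t * (2 * (Tf (u1 - u0) \<bullet> d)) + t\<^sup>2 * qn Tf d)"
    unfolding L Q by (simp add: algebra_simps)
  moreover have "f (u1 + t *\<^sub>R d) - f u1 \<le> t * (f w - f u1)" using fconvt by (simp add: algebra_simps)
  ultimately show "0 \<le> t * (f w - f u1 + rr u1 yb \<bullet> adjoint F (w - u1) + \<sigma> * (Tf (u1 - u0) \<bullet> (w - u1)))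
      + t\<^sup>2 * (Cl d (\<lambda>i. 0) + \<sigma>/2 * qn Tf d)"
    unfolding D d_def[symmetric] by (simp add: algebra_simps)
qed

lemma blk_upd: "blk y i w z = (blk y i a z)(i := w)" and blk_at: "blk y i a z i = a"
  by (auto simp: blk_def)

lemma blk_Y: "i \<in> {1..p} \<Longrightarrow> \<forall>l\<in>{1..p}. y l \<in> Y l \<Longrightarrow> \<forall>l\<in>{1..p}. z l \<in> Y l \<Longrightarrow> a \<in> Y i
   \<Longrightarrow> \<forall>l\<in>{1..p}. blk y i a z l \<in> Y l"
  by (auto simp: blk_def)

lemma ybY: "i \<in> {1..p} \<Longrightarrow> yb i \<in> Y i" using step_ybar by blast
lemma y1Y: "i \<in> {1..p} \<Longrightarrow> y1 i \<in> Y i" using step_y by blast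

lemma fo_gen:
  assumes l: "l \<in> {1..p}" and yY: "\<forall>q\<in>{1..p}. y q \<in> Y q" and aY: "a \<in> Y l"
    and opt: "\<forall>w\<in>Y l. Lam uu (blk y l a yb) + \<sigma>/2 * qn (Tth \<sigma> E P A l) (a - y0 l)
         \<le> Lam uu (blk y l w yb) + \<sigma>/2 * qn (Tth \<sigma> E P A l) (w - y0 l)"
  shows "\<forall>h\<in>Y l. (P l a - b l) \<bullet> h + rr uu (blk y l a yb) \<bullet> adjoint (A l) h
             + \<sigma> * (Tth \<sigma> E P A l (a - y0 l) \<bullet> h) = 0"
proof -
  have c: "\<forall>q\<in>{1..p}. blk y l a yb q \<in> Y q"
    by (rule blk_Y[OF l yY]) (use ybY aY in auto)
  have o: "\<forall>w\<in>Y l. Lam uu (blk y l a yb) + \<sigma>/2 * qn (Tth \<sigma> E P A l) (blk y l a yb l - y0 l)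
         \<le> Lam uu ((blk y l a yb)(l := w)) + \<sigma>/2 * qn (Tth \<sigma> E P A l) (w - y0 l)"
    using opt unfolding blk_at blk_upd[symmetric] .
  show ?thesis using block_fo[OF l c y0Y[OF l] o] unfolding blk_at .
qed

lemma fo_yb: "l \<in> {1..p} \<Longrightarrow> \<forall>h\<in>Y l. (P l (yb l) - b l) \<bullet> h + rr u0 (blk y0 l (yb l) yb) \<bullet> adjoint (A l) h
             + \<sigma> * (Tth \<sigma> E P A l (yb l - y0 l) \<bullet> h) = 0"
  by (rule fo_gen) (use y0Y ybY step_ybar in auto)

lemma fo_y1: "l \<in> {1..p} \<Longrightarrow> \<forall>h\<in>Y l. (P l (y1 l) - b l) \<bullet> h + rr u1 (blk y1 l (y1 l) yb) \<bullet> adjoint (A l) h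
             + \<sigma> * (Tth \<sigma> E P A l (y1 l - y0 l) \<bullet> h) = 0"
  by (rule fo_gen) (use y1Y step_y in auto)

end

context sgs begin

lemma sum_if_less: "l \<le> Suc p \<Longrightarrow> (\<Sum>j\<in>{1..p}. if j < l then g j else 0) = (\<Sum>j\<in>{1..<l}. g j)"
proof -
  assume l: "l \<le> Suc p"
  have "(\<Sum>j\<in>{1..p}. if j < l then g j else 0) = sum g {j \<in> {1..p}. j < l}"
    by (rule sum.inter_filter[symmetric]) simp
  also have "{j \<in> {1..p}. j < l} = {1..<l}" using l by auto
  finally show ?thesis .
qed

lemma sum_blk_diff:
  assumes l: "l \<in> {1..p}"
  shows "(\<Sum>j\<in>{1..p}. adjoint (A j) (blk y l a z j)) - (\<Sum>j\<in>{1..p}. adjoint (A j) (blk y' l a' z j))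
     = (\<Sum>j\<in>{1..<l}. adjoint (A j) (y j - y' j)) + adjoint (A l) (a - a')"
proof -
  have "(\<Sum>j\<in>{1..p}. adjoint (A j) (blk y l a z j)) - (\<Sum>j\<in>{1..p}. adjoint (A j) (blk y' l a' z j))
     = (\<Sum>j\<in>{1..p}. (if j < l then adjoint (A j) (y j - y' j) else 0) + (if j = l then adjoint (A l) (a - a') else 0))"
    unfolding sum_subtractf[symmetric]
    by (rule sum.cong) (auto simp: blk_def linear_diff[OF linAa])
  also have "\<dots> = (\<Sum>j\<in>{1..p}. if j < l then adjoint (A j) (y j - y' j) else 0) + (\<Sum>j\<in>{1..p}. if j = l then adjoint (A l) (a - a') else 0)"
    by (rule sum.distrib)
  also have "\<dots> = (\<Sum>j\<in>{1..<l}. adjoint (A j) (y j - y' j)) + adjoint (A l) (a - a')"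
  proof -
    have lle: "l \<le> Suc p" using l by auto
    show ?thesis unfolding sum_if_less[OF lle] using l by simp
  qed
  finally show ?thesis .
qed

lemma key:
  assumes l: "l \<in> {1..p}"
  shows "E l (yb l - y1 l) = A l (adjoint F (u1 - u0) + (\<Sum>j\<in>{1..<l}. adjoint (A j) (y1 j - y0 j)))"
proof -
  define \<Delta> where "\<Delta> = yb l - y1 l"
  define W where "W = adjoint F (u1 - u0) + (\<Sum>j\<in>{1..<l}. adjoint (A j) (y1 j - y0 j))"
  define T where "T = Tth \<sigma> E P A l"
  have sub: "subspace (Y l)" using Ysub[OF l] .
  have lP: "linear (P l)" and lE: "linear (E l)" using Ppsd[OF l] Esa[OF l] unfolding sa_psd_on_def by auto
  have lT: "linear T" using Tth_sa[OF l] unfolding sa_psd_on_def T_def by auto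
  have lA: "linear (A l)" using linA[OF l] .
  have rdiff: "rr u0 (blk y0 l (yb l) yb) - rr u1 (blk y1 l (y1 l) yb) = \<sigma> *\<^sub>R (adjoint (A l) \<Delta> - W)"
  proof -
    have "Gm u0 (blk y0 l (yb l) yb) - Gm u1 (blk y1 l (y1 l) yb)
        = adjoint F u0 - adjoint F u1 + ((\<Sum>j\<in>{1..p}. adjoint (A j) (blk y0 l (yb l) yb j)) - (\<Sum>j\<in>{1..p}. adjoint (A j) (blk y1 l (y1 l) yb j)))"
      unfolding Gm_def by (simp add: algebra_simps)
    also have "\<dots> = adjoint F u0 - adjoint F u1 + ((\<Sum>j\<in>{1..<l}. adjoint (A j) (y0 j - y1 j)) + adjoint (A l) \<Delta>)"
      unfolding sum_blk_diff[OF l] \<Delta>_def ..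
    also have "\<dots> = adjoint (A l) \<Delta> - W"
    proof -
      have "(\<Sum>j\<in>{1..<l}. adjoint (A j) (y0 j - y1 j)) = - (\<Sum>j\<in>{1..<l}. adjoint (A j) (y1 j - y0 j))"
        unfolding sum_negf[symmetric]
        by (rule sum.cong) (use l in \<open>auto simp: linear_diff[OF linAa]\<close>)
      thus ?thesis unfolding W_def by (simp add: linear_diff[OF linFa] algebra_simps)
    qed
    finally show ?thesis unfolding rr_def by (simp add: scaleR_diff_right[symmetric])
  qed
  have orth: "(E l \<Delta> - A l W) \<bullet> h = 0" if h: "h \<in> Y l" for h
  proof -
    define rb where "rb = rr u0 (blk y0 l (yb l) yb)"
    define r1 where "r1 = rr u1 (blk y1 l (y1 l) yb)"
    have e1: "(P l (yb l) - b l) \<bullet> h + rb \<bullet> adjoint (A l) h + \<sigma> * (T (yb l - y0 l) \<bullet> h) = 0"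
      using fo_yb[OF l] h unfolding T_def rb_def by blast
    have e2: "(P l (y1 l) - b l) \<bullet> h + r1 \<bullet> adjoint (A l) h + \<sigma> * (T (y1 l - y0 l) \<bullet> h) = 0"
      using fo_y1[OF l] h unfolding T_def r1_def by blast
    have 1: "(P l (yb l) - b l) \<bullet> h - (P l (y1 l) - b l) \<bullet> h = P l \<Delta> \<bullet> h"
      unfolding \<Delta>_def by (simp add: linear_diff[OF lP] inner_diff_left)
    have 2: "rb \<bullet> adjoint (A l) h - r1 \<bullet> adjoint (A l) h = \<sigma> * (A l (adjoint (A l) \<Delta>) \<bullet> h - A l W \<bullet> h)"
    proof -
      have "rb \<bullet> adjoint (A l) h - r1 \<bullet> adjoint (A l) h = (rb - r1) \<bullet> adjoint (A l) h" by (simp add: inner_diff_left)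
      also have "\<dots> = \<sigma> * ((adjoint (A l) \<Delta> - W) \<bullet> adjoint (A l) h)" using rdiff unfolding rb_def r1_def by simp
      also have "\<dots> = \<sigma> * (A l (adjoint (A l) \<Delta> - W) \<bullet> h)" by (simp add: adjoint_works[OF lA])
      finally show ?thesis by (simp add: linear_diff[OF lA] inner_diff_left)
    qed
    have 3: "T (yb l - y0 l) \<bullet> h - T (y1 l - y0 l) \<bullet> h = T \<Delta> \<bullet> h"
      unfolding \<Delta>_def inner_diff_left[symmetric] linear_diff[OF lT, symmetric] by simp
    have 4: "T \<Delta> \<bullet> h = E l \<Delta> \<bullet> h - (1/\<sigma>) * (P l \<Delta> \<bullet> h) - A l (adjoint (A l) \<Delta>) \<bullet> h"
      unfolding T_def Tth_def by (simp add: inner_diff_left)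
    have "P l \<Delta> \<bullet> h + \<sigma> * (A l (adjoint (A l) \<Delta>) \<bullet> h - A l W \<bullet> h) + \<sigma> * (T \<Delta> \<bullet> h) = 0"
      using e1 e2 1 2 3 by (simp add: algebra_simps)
    hence "\<sigma> * (E l \<Delta> \<bullet> h - A l W \<bullet> h) = 0" unfolding 4 using sig by (simp add: algebra_simps)
    thus ?thesis using sig by (simp add: inner_diff_left)
  qed
  have VY: "E l \<Delta> - A l W \<in> Y l"
  proof -
    have "\<Delta> \<in> Y l" unfolding \<Delta>_def using ybY[OF l] y1Y[OF l] sub by (simp add: subspace_diff)
    hence "E l \<Delta> \<in> Y l" using Esa[OF l] unfolding sa_psd_on_def by blast
    thus ?thesis using AY[OF l] sub by (simp add: subspace_diff)
  qed
  have "(E l \<Delta> - A l W) \<bullet> (E l \<Delta> - A l W) = 0" using orth[OF VY] .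
  hence "E l \<Delta> - A l W = 0" by simp
  thus ?thesis unfolding \<Delta>_def W_def by simp
qed

end

lemma swap_tri:
  fixes g :: "nat \<Rightarrow> nat \<Rightarrow> 'a::comm_monoid_add"
  shows "(\<Sum>l\<in>{1..p}. \<Sum>j\<in>{1..<l}. g j l) = (\<Sum>j\<in>{1..<p}. \<Sum>l\<in>{j<..p}. g j l)"
proof -
  have "(\<Sum>l\<in>{1..p}. \<Sum>j\<in>{1..<l}. g j l) = (\<Sum>l\<in>{1..p}. \<Sum>j\<in>{j. j \<in> {1..p} \<and> j < l}. g j l)"
    by (rule sum.cong) (auto intro!: sum.cong)
  also have "\<dots> = (\<Sum>j\<in>{1..p}. \<Sum>l\<in>{l. l \<in> {1..p} \<and> j < l}. g j l)"
    by (rule sum.swap_restrict) auto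
  also have "\<dots> = (\<Sum>j\<in>{1..p}. \<Sum>l\<in>{j<..p}. g j l)"
    by (rule sum.cong) (auto intro!: sum.cong)
  also have "\<dots> = (\<Sum>j\<in>{1..<p}. \<Sum>l\<in>{j<..p}. g j l)"
    by (rule sum.mono_neutral_right) auto
  finally show ?thesis .
qed

context sgs begin

definition "cc l uw = adjoint (A l) (inv_into (Y l) (E l) (A l (Fi_adj F A l uw)))"

lemma cc_restrict:
  assumes "l \<le> Suc m"
  shows "cc l (fst uw, \<lambda>j. if j < Suc m then snd uw j else 0) = cc l uw"
proof -
  have "Fi_adj F A l (fst uw, \<lambda>j. if j < Suc m then snd uw j else 0) = Fi_adj F A l uw"
    unfolding Fi_adj_def using assms by (auto intro!: sum.cong)
  thus ?thesis unfolding cc_def by simp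
qed

lemma hatT_closed:
  "hatT \<sigma> Tf F A P E Y (Suc m) uw = (Tf (fst uw) + (\<Sum>l\<in>{1..Suc m}. F (cc l uw)),
     \<lambda>j. if 1 \<le> j \<and> j < Suc m then Tth \<sigma> E P A j (snd uw j) + (\<Sum>l\<in>{j<..Suc m}. A j (cc l uw)) else 0)"
proof (induction m arbitrary: uw)
  case 0
  show ?case by (auto simp: padd_def sgscorr_def Fi_def cc_def fun_eq_iff)
next
  case (Suc m)
  define uw' where "uw' = (fst uw, \<lambda>j. if j < Suc m then snd uw j else 0)"
  have cc': "\<And>l. l \<in> {1..Suc m} \<Longrightarrow> cc l uw' = cc l uw" unfolding uw'_def by (rule cc_restrict) auto
  have IH: "hatT \<sigma> Tf F A P E Y (Suc m) uw' = (Tf (fst uw) + (\<Sum>l\<in>{1..Suc m}. F (cc l uw)),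
     \<lambda>j. if 1 \<le> j \<and> j < Suc m then Tth \<sigma> E P A j (snd uw j) + (\<Sum>l\<in>{j<..Suc m}. A j (cc l uw)) else 0)"
  proof -
    have s1: "(\<Sum>l\<in>{1..Suc m}. F (cc l uw')) = (\<Sum>l\<in>{1..Suc m}. F (cc l uw))"
      by (rule sum.cong) (auto simp: cc')
    have s2: "(\<Sum>l\<in>{j<..Suc m}. A j (cc l uw')) = (\<Sum>l\<in>{j<..Suc m}. A j (cc l uw))" if "1 \<le> j" for j
      by (rule sum.cong) (use that in \<open>auto simp: cc'\<close>)
    show ?thesis unfolding Suc.IH[of uw'] s1 using s2 by (auto simp: uw'_def)
  qed
  have H: "hatT \<sigma> Tf F A P E Y (Suc (Suc m)) uw = padd (fst (hatT \<sigma> Tf F A P E Y (Suc m) uw'),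
      (snd (hatT \<sigma> Tf F A P E Y (Suc m) uw'))(Suc m := Tth \<sigma> E P A (Suc m) (snd uw (Suc m))))
      (Fi F A (Suc (Suc m)) (cc (Suc (Suc m)) uw))"
    by (simp add: uw'_def Let_def sgscorr_def cc_def)
  have fstq: "Tf (fst uw) + (\<Sum>l\<in>{1..Suc m}. F (cc l uw)) + F (cc (Suc (Suc m)) uw)
      = Tf (fst uw) + (\<Sum>l\<in>{1..Suc (Suc m)}. F (cc l uw))"
    by (simp add: sum.cl_ivl_Suc)
  have sndq: "(\<lambda>j. (if j = Suc m then Tth \<sigma> E P A (Suc m) (snd uw (Suc m))
      else if Suc 0 \<le> j \<and> j < Suc m then Tth \<sigma> E P A j (snd uw j) + (\<Sum>l\<in>{j<..Suc m}. A j (cc l uw)) else 0)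
      + (if 1 \<le> j \<and> j < Suc (Suc m) then A j (cc (Suc (Suc m)) uw) else 0))
    = (\<lambda>j. if 1 \<le> j \<and> j < Suc (Suc m) then Tth \<sigma> E P A j (snd uw j) + (\<Sum>l\<in>{j<..Suc (Suc m)}. A j (cc l uw)) else 0)"
  proof
    fix j
    show "(if j = Suc m then Tth \<sigma> E P A (Suc m) (snd uw (Suc m))
      else if Suc 0 \<le> j \<and> j < Suc m then Tth \<sigma> E P A j (snd uw j) + (\<Sum>l\<in>{j<..Suc m}. A j (cc l uw)) else 0)
      + (if 1 \<le> j \<and> j < Suc (Suc m) then A j (cc (Suc (Suc m)) uw) else 0)
    = (if 1 \<le> j \<and> j < Suc (Suc m) then Tth \<sigma> E P A j (snd uw j) + (\<Sum>l\<in>{j<..Suc (Suc m)}. A j (cc l uw)) else 0)"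
    proof (cases "j = Suc m")
      case True
      have "{Suc m<..Suc (Suc m)} = {Suc (Suc m)}" by auto
      thus ?thesis using True by simp
    next
      case False
      show ?thesis
      proof (cases "1 \<le> j \<and> j < Suc m")
        case True
        have "{j<..Suc (Suc m)} = insert (Suc (Suc m)) {j<..Suc m}" using True by auto
        hence "(\<Sum>l\<in>{j<..Suc (Suc m)}. A j (cc l uw)) = A j (cc (Suc (Suc m)) uw) + (\<Sum>l\<in>{j<..Suc m}. A j (cc l uw))"
          by simp
        thus ?thesis using True False by (simp add: algebra_simps)
      next
        case F2: False
        thus ?thesis using False by auto
      qed
    qed
  qed
  show ?case unfolding H IH using fstq sndq[simplified] by (simp add: padd_def Fi_def)
qed

definition "Einv l m = inv_into (Y l) (E l) m"
definition "aa l \<delta> = A l (Fi_adj F A l \<delta>)"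
definition "hq \<delta> = fst \<delta> \<bullet> Tf (fst \<delta>) + (\<Sum>j\<in>{1..<p}. snd \<delta> j \<bullet> Tth \<sigma> E P A j (snd \<delta> j))
    + (\<Sum>l\<in>{1..p}. aa l \<delta> \<bullet> Einv l (aa l \<delta>))"

lemma per_l:
  assumes l: "l \<in> {1..p}"
  shows "aa l \<delta> \<bullet> Einv l (aa l \<delta>) = fst \<delta> \<bullet> F (cc l \<delta>) + (\<Sum>j\<in>{1..<l}. snd \<delta> j \<bullet> A j (cc l \<delta>))"
proof -
  have "aa l \<delta> \<bullet> Einv l (aa l \<delta>) = Fi_adj F A l \<delta> \<bullet> cc l \<delta>"
    unfolding aa_def cc_def Einv_def by (simp add: adjoint_works[OF linA[OF l]])
  also have "\<dots> = fst \<delta> \<bullet> F (cc l \<delta>) + (\<Sum>j\<in>{1..<l}. snd \<delta> j \<bullet> A j (cc l \<delta>))"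
  proof -
    have "(\<Sum>j\<in>{1..<l}. adjoint (A j) (snd \<delta> j)) \<bullet> cc l \<delta> = (\<Sum>j\<in>{1..<l}. snd \<delta> j \<bullet> A j (cc l \<delta>))"
      unfolding inner_sum_left
      by (rule sum.cong) (use l in \<open>auto simp: adjoint_clauses(2)[OF linA]\<close>)
    thus ?thesis unfolding Fi_adj_def by (simp add: inner_add_left adjoint_clauses(2)[OF linF])
  qed
  finally show ?thesis .
qed

lemma hatqf_closed: "hatqf \<sigma> Tf F A P E Y p \<delta> = hq \<delta>"
proof -
  obtain m where pm: "p = Suc m" using p1 by (cases p) auto
  have H: "hatqf \<sigma> Tf F A P E Y p \<delta> = fst \<delta> \<bullet> (Tf (fst \<delta>) + (\<Sum>l\<in>{1..p}. F (cc l \<delta>)))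
      + (\<Sum>j\<in>{1..<p}. snd \<delta> j \<bullet> (Tth \<sigma> E P A j (snd \<delta> j) + (\<Sum>l\<in>{j<..p}. A j (cc l \<delta>))))"
    unfolding hatqf_def Let_def pm hatT_closed by (auto intro!: sum.cong)
  have "(\<Sum>l\<in>{1..p}. aa l \<delta> \<bullet> Einv l (aa l \<delta>)) = (\<Sum>l\<in>{1..p}. fst \<delta> \<bullet> F (cc l \<delta>) + (\<Sum>j\<in>{1..<l}. snd \<delta> j \<bullet> A j (cc l \<delta>)))"
    by (rule sum.cong) (simp_all add: per_l)
  also have "\<dots> = (\<Sum>l\<in>{1..p}. fst \<delta> \<bullet> F (cc l \<delta>)) + (\<Sum>j\<in>{1..<p}. \<Sum>l\<in>{j<..p}. snd \<delta> j \<bullet> A j (cc l \<delta>))"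
    unfolding sum.distrib swap_tri[of "\<lambda>j l. snd \<delta> j \<bullet> A j (cc l \<delta>)" p] ..
  finally have X: "(\<Sum>l\<in>{1..p}. aa l \<delta> \<bullet> Einv l (aa l \<delta>)) = \<dots>" .
  show ?thesis unfolding H hq_def X
    by (simp add: inner_add_right inner_sum_right sum.distrib)
qed

lemma E_inj: assumes i: "i \<in> {1..p}" shows "inj_on (E i) (Y i)"
proof (rule inj_onI)
  fix a c assume a: "a \<in> Y i" and c: "c \<in> Y i" and eq: "E i a = E i c"
  have lE: "linear (E i)" using Esa[OF i] unfolding sa_psd_on_def by auto
  have ac: "a - c \<in> Y i" using a c Ysub[OF i] by (simp add: subspace_diff)
  have "E i (a - c) = 0" using eq by (simp add: linear_diff[OF lE])
  hence "(a - c) \<bullet> E i (a - c) = 0" by simp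
  thus "a = c" using Epos[OF i ac] by (cases "a - c = 0") auto
qed

lemma E_surj: assumes i: "i \<in> {1..p}" shows "E i ` Y i = Y i"
  using surj_sub[OF _ Ysub[OF i] _ E_inj[OF i]] Esa[OF i] unfolding sa_psd_on_def by blast

lemma Einv: assumes i: "i \<in> {1..p}" and m: "m \<in> Y i"
  shows "Einv i m \<in> Y i" "E i (Einv i m) = m"
proof -
  have "m \<in> E i ` Y i" using E_surj[OF i] m by simp
  thus "Einv i m \<in> Y i" "E i (Einv i m) = m" unfolding Einv_def
    by (auto intro: inv_into_into f_inv_into_f)
qed

lemma Einv_f: "i \<in> {1..p} \<Longrightarrow> a \<in> Y i \<Longrightarrow> Einv i (E i a) = a"
  unfolding Einv_def using E_inj inv_into_f_f by metis

lemma Einv_quad: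
  assumes i: "i \<in> {1..p}" and m1: "m1 \<in> Y i" and m2: "m2 \<in> Y i"
  shows "m1 \<bullet> Einv i m1 + 2 * (Einv i m1 \<bullet> m2) \<le> (m1 + m2) \<bullet> Einv i (m1 + m2)"
proof -
  have sub: "subspace (Y i)" using Ysub[OF i] .
  have m12: "m1 + m2 \<in> Y i" using m1 m2 sub by (simp add: subspace_add)
  define e1 where "e1 = Einv i m1"
  define e2 where "e2 = Einv i (m1 + m2)"
  have e1Y: "e1 \<in> Y i" and Ee1: "E i e1 = m1" using Einv[OF i m1] by (auto simp: e1_def)
  have e2Y: "e2 \<in> Y i" and Ee2: "E i e2 = m1 + m2" using Einv[OF i m12] by (auto simp: e2_def)
  have lE: "linear (E i)" and saE: "\<forall>a\<in>Y i. \<forall>c\<in>Y i. E i a \<bullet> c = a \<bullet> E i c"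
    and psdE: "\<forall>a\<in>Y i. 0 \<le> a \<bullet> E i a"
    using Esa[OF i] unfolding sa_psd_on_def by auto
  have dY: "e2 - e1 \<in> Y i" using e1Y e2Y sub by (simp add: subspace_diff)
  have Ed: "E i (e2 - e1) = m2" using Ee1 Ee2 by (simp add: linear_diff[OF lE])
  have pos: "0 \<le> (e2 - e1) \<bullet> m2" using psdE dY Ed by metis
  have s: "m1 \<bullet> e2 = e1 \<bullet> (m1 + m2)" using saE e1Y e2Y Ee1 Ee2 by metis
  have "(m1 + m2) \<bullet> e2 - (m1 \<bullet> e1 + 2 * (e1 \<bullet> m2)) = (e2 - e1) \<bullet> m2"
    using s by (simp add: inner_add_left inner_add_right inner_diff_left inner_commute algebra_simps)
  thus ?thesis using pos unfolding e1_def[symmetric] e2_def[symmetric] by linarith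
qed

end


lemma swap_tri':
  fixes g :: "nat \<Rightarrow> nat \<Rightarrow> 'a::comm_monoid_add"
  shows "(\<Sum>l\<in>{1..p}. \<Sum>j\<in>{1..<l}. g j l) = (\<Sum>j\<in>{1..p}. \<Sum>l\<in>{j<..p}. g j l)"
proof -
  have "(\<Sum>j\<in>{1..p}. \<Sum>l\<in>{j<..p}. g j l) = (\<Sum>j\<in>{1..<p}. \<Sum>l\<in>{j<..p}. g j l)"
    by (rule sum.mono_neutral_right) auto
  thus ?thesis using swap_tri[of g p] by simp
qed

context sgs begin

definition "bt l = adjoint (A l) (yb l - y1 l)"

lemma rr_yb: "rr u1 yb = rr u1 y1 + \<sigma> *\<^sub>R (\<Sum>l\<in>{1..p}. bt l)"
proof -
  have "(\<Sum>i\<in>{1..p}. adjoint (A i) (yb i)) = (\<Sum>i\<in>{1..p}. adjoint (A i) (y1 i)) + (\<Sum>l\<in>{1..p}. bt l)"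
  proof -
    have "(\<Sum>i\<in>{1..p}. adjoint (A i) (yb i)) = (\<Sum>i\<in>{1..p}. adjoint (A i) (y1 i) + bt i)"
      by (rule sum.cong) (auto simp: bt_def linear_diff[OF linAa])
    thus ?thesis by (simp add: sum.distrib)
  qed
  thus ?thesis unfolding rr_def Gm_def by (simp add: algebra_simps)
qed

lemma rr_cfg:
  assumes j: "j \<in> {1..p}"
  shows "rr u1 (blk y1 j (y1 j) yb) = rr u1 y1 + \<sigma> *\<^sub>R (\<Sum>l\<in>{j<..p}. bt l)"
proof -
  have "(\<Sum>i\<in>{1..p}. adjoint (A i) (blk y1 j (y1 j) yb i)) = (\<Sum>i\<in>{1..p}. adjoint (A i) (y1 i) + (if j < i then bt i else 0))"
    by (rule sum.cong) (auto simp: bt_def blk_def linear_diff[OF linAa])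
  also have "\<dots> = (\<Sum>i\<in>{1..p}. adjoint (A i) (y1 i)) + (\<Sum>l\<in>{j<..p}. bt l)"
  proof -
    have "(\<Sum>i\<in>{1..p}. if j < i then bt i else 0) = sum bt {i \<in> {1..p}. j < i}"
      by (rule sum.inter_filter[symmetric]) simp
    also have "{i \<in> {1..p}. j < i} = {j<..p}" using j by auto
    finally show ?thesis by (simp add: sum.distrib)
  qed
  finally show ?thesis unfolding rr_def Gm_def by (simp add: algebra_simps)
qed

lemma aa_add: "l \<in> {1..p} \<Longrightarrow> aa l (a1 + a2, \<lambda>j. c1 j + c2 j) = aa l (a1, c1) + aa l (a2, c2)"
proof -
  assume l: "l \<in> {1..p}"
  have "(\<Sum>j\<in>{1..<l}. adjoint (A j) (c1 j + c2 j)) = (\<Sum>j\<in>{1..<l}. adjoint (A j) (c1 j)) + (\<Sum>j\<in>{1..<l}. adjoint (A j) (c2 j))"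
    unfolding sum.distrib[symmetric] by (rule sum.cong) (use l in \<open>auto simp: linear_add[OF linAa]\<close>)
  thus ?thesis unfolding aa_def Fi_adj_def
    by (simp add: linear_add[OF linFa] linear_add[OF linA[OF l]] algebra_simps)
qed

lemma main_ineq:
  assumes w: "w \<in> domf" and y'Y: "\<forall>i\<in>{1..p}. y' i \<in> Y i"
  shows "Lam u1 y1 + \<sigma>/2 * hatqf \<sigma> Tf F A P E Y p (u1 - u0, \<lambda>i. y1 i - y0 i)
           + \<sigma>/2 * qn (Tth \<sigma> E P A p) (y1 p - y0 p)
         \<le> Lam w y' + \<sigma>/2 * hatqf \<sigma> Tf F A P E Y p (w - u0, \<lambda>i. y' i - y0 i)
           + \<sigma>/2 * qn (Tth \<sigma> E P A p) (y' p - y0 p)"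
proof -
  define d where "d = w - u1"
  define e where "e i = y' i - y1 i" for i
  define r1 where "r1 = rr u1 y1"
  have pp: "p \<in> {1..p}" using p1 by auto
  have eY: "\<And>i. i \<in> {1..p} \<Longrightarrow> e i \<in> Y i" using y'Y y1Y Ysub by (auto simp: e_def subspace_diff)
  have d1Y: "\<And>i. i \<in> {1..p} \<Longrightarrow> y1 i - y0 i \<in> Y i" using y0Y y1Y Ysub by (auto simp: subspace_diff)
  have LA: "Lam w y' = Lam u1 y1 + (f w - f u1) + Dl u1 y1 d e + Cl d e"
  proof -
    have h: "\<forall>i\<in>{1..p}. y1 i \<in> Y i \<and> e i \<in> Y i" using y1Y eY by auto
    have "(\<lambda>i. y1 i + 1 *\<^sub>R e i) = y'" by (auto simp: e_def)
    moreover have "u1 + 1 *\<^sub>R d = w" by (simp add: d_def)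
    ultimately show ?thesis using lam_line[OF h, of u1 1 d] by simp
  qed
  have Cl0: "0 \<le> Cl d e"
  proof -
    have "0 \<le> (\<Sum>i\<in>{1..p}. 1/2 * (e i \<bullet> P i (e i)))"
      by (rule sum_nonneg) (use eY Ppsd in \<open>auto simp: sa_psd_on_def\<close>)
    thus ?thesis unfolding Cl_def using sig by simp
  qed
  define Lin where "Lin = Tf (u1 - u0) \<bullet> d + (\<Sum>j\<in>{1..<p}. Tth \<sigma> E P A j (y1 j - y0 j) \<bullet> e j)
      + (\<Sum>l\<in>{1..p}. (yb l - y1 l) \<bullet> aa l (d, e))"
  have HB: "hq (u1 - u0, \<lambda>i. y1 i - y0 i) + 2 * Lin \<le> hq (w - u0, \<lambda>i. y' i - y0 i)"
  proof -
    have t1: "qn Tf (u1 - u0) + 2 * (Tf (u1 - u0) \<bullet> d) \<le> qn Tf (w - u0)"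
    proof -
      have "qn Tf (w - u0) = qn Tf ((u1 - u0) + 1 *\<^sub>R d)" by (simp add: d_def)
      also have "\<dots> = qn Tf (u1 - u0) + 1 * (2 * (Tf (u1 - u0) \<bullet> d)) + 1\<^sup>2 * qn Tf d"
        by (rule qn_line[OF Tfpsd]) auto
      finally show ?thesis using qn_nonneg[OF Tfpsd, of d] by simp
    qed
    have t2: "qn (Tth \<sigma> E P A j) (y1 j - y0 j) + 2 * (Tth \<sigma> E P A j (y1 j - y0 j) \<bullet> e j)
        \<le> qn (Tth \<sigma> E P A j) (y' j - y0 j)" if j: "j \<in> {1..p}" for j
    proof -
      have "qn (Tth \<sigma> E P A j) (y' j - y0 j) = qn (Tth \<sigma> E P A j) ((y1 j - y0 j) + 1 *\<^sub>R e j)" by (simp add: e_def)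
      also have "\<dots> = qn (Tth \<sigma> E P A j) (y1 j - y0 j) + 1 * (2 * (Tth \<sigma> E P A j (y1 j - y0 j) \<bullet> e j))
          + 1\<^sup>2 * qn (Tth \<sigma> E P A j) (e j)"
        by (rule qn_line[OF Tth_sa[OF j] d1Y[OF j] eY[OF j]])
      finally show ?thesis using qn_nonneg[OF Tth_sa[OF j] eY[OF j]] by simp
    qed
    have t3: "aa l (u1 - u0, \<lambda>i. y1 i - y0 i) \<bullet> Einv l (aa l (u1 - u0, \<lambda>i. y1 i - y0 i))
        + 2 * ((yb l - y1 l) \<bullet> aa l (d, e))
        \<le> aa l (w - u0, \<lambda>i. y' i - y0 i) \<bullet> Einv l (aa l (w - u0, \<lambda>i. y' i - y0 i))" if l: "l \<in> {1..p}" for l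
    proof -
      define m1 where "m1 = aa l (u1 - u0, \<lambda>i. y1 i - y0 i)"
      define m2 where "m2 = aa l (d, e)"
      have sp: "aa l (w - u0, \<lambda>i. y' i - y0 i) = m1 + m2"
      proof -
        have "(w - u0, \<lambda>i. y' i - y0 i) = ((u1 - u0) + d, \<lambda>i. (y1 i - y0 i) + e i)"
          by (simp add: d_def e_def)
        moreover have "aa l ((u1 - u0) + d, \<lambda>i. (y1 i - y0 i) + e i) = aa l (u1 - u0, \<lambda>i. y1 i - y0 i) + aa l (d, \<lambda>i. e i)"
          by (rule aa_add[OF l])
        ultimately show ?thesis unfolding m1_def m2_def by (simp only:)
      qed
      have m1Y: "m1 \<in> Y l" and m2Y: "m2 \<in> Y l" unfolding m1_def m2_def aa_def using AY[OF l] by auto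
      have "E l (yb l - y1 l) = m1" unfolding m1_def aa_def Fi_adj_def using key[OF l] by simp
      hence em: "Einv l m1 = yb l - y1 l"
        using Einv_f[OF l] ybY[OF l] y1Y[OF l] Ysub[OF l] by (metis subspace_diff)
      show ?thesis using Einv_quad[OF l m1Y m2Y] unfolding sp em m1_def[symmetric] m2_def[symmetric] by simp
    qed
    have s2: "(\<Sum>j\<in>{1..<p}. qn (Tth \<sigma> E P A j) (y1 j - y0 j)) + 2 * (\<Sum>j\<in>{1..<p}. Tth \<sigma> E P A j (y1 j - y0 j) \<bullet> e j)
        \<le> (\<Sum>j\<in>{1..<p}. qn (Tth \<sigma> E P A j) (y' j - y0 j))"
      unfolding sum_distrib_left sum.distrib[symmetric] by (rule sum_mono) (use t2 in auto)
    have s3: "(\<Sum>l\<in>{1..p}. aa l (u1 - u0, \<lambda>i. y1 i - y0 i) \<bullet> Einv l (aa l (u1 - u0, \<lambda>i. y1 i - y0 i)))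
        + 2 * (\<Sum>l\<in>{1..p}. (yb l - y1 l) \<bullet> aa l (d, e))
        \<le> (\<Sum>l\<in>{1..p}. aa l (w - u0, \<lambda>i. y' i - y0 i) \<bullet> Einv l (aa l (w - u0, \<lambda>i. y' i - y0 i)))"
      unfolding sum_distrib_left sum.distrib[symmetric] by (rule sum_mono) (use t3 in auto)
    show ?thesis using t1 s2 s3 unfolding hq_def Lin_def qn_def by (simp add: algebra_simps)
  qed
  have QC: "qn (Tth \<sigma> E P A p) (y1 p - y0 p) + 2 * (Tth \<sigma> E P A p (y1 p - y0 p) \<bullet> e p)
        \<le> qn (Tth \<sigma> E P A p) (y' p - y0 p)"
  proof -
    have "qn (Tth \<sigma> E P A p) (y' p - y0 p) = qn (Tth \<sigma> E P A p) ((y1 p - y0 p) + 1 *\<^sub>R e p)" by (simp add: e_def)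
    also have "\<dots> = qn (Tth \<sigma> E P A p) (y1 p - y0 p) + 1 * (2 * (Tth \<sigma> E P A p (y1 p - y0 p) \<bullet> e p))
        + 1\<^sup>2 * qn (Tth \<sigma> E P A p) (e p)"
      by (rule qn_line[OF Tth_sa[OF pp] d1Y[OF pp] eY[OF pp]])
    finally show ?thesis using qn_nonneg[OF Tth_sa[OF pp] eY[OF pp]] by simp
  qed
  have LD: "0 \<le> f w - f u1 + Dl u1 y1 d e + \<sigma> * Lin + \<sigma> * (Tth \<sigma> E P A p (y1 p - y0 p) \<bullet> e p)"
  proof -
    define Z where "Z j = (P j (y1 j) - b j) \<bullet> e j + rr u1 (blk y1 j (y1 j) yb) \<bullet> adjoint (A j) (e j)
      + \<sigma> * (Tth \<sigma> E P A j (y1 j - y0 j) \<bullet> e j)" for j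
    have Z0: "(\<Sum>j\<in>{1..p}. Z j) = 0" by (rule sum.neutral) (use fo_y1 eY in \<open>auto simp: Z_def\<close>)
    have Uf: "0 \<le> f w - f u1 + rr u1 yb \<bullet> adjoint F d + \<sigma> * (Tf (u1 - u0) \<bullet> d)"
      using u_fo[OF w] unfolding d_def .
    have Zx: "Z j = (P j (y1 j) - b j) \<bullet> e j + r1 \<bullet> adjoint (A j) (e j)
        + \<sigma> * (\<Sum>l\<in>{j<..p}. bt l \<bullet> adjoint (A j) (e j)) + \<sigma> * (Tth \<sigma> E P A j (y1 j - y0 j) \<bullet> e j)"
      if j: "j \<in> {1..p}" for j
      unfolding Z_def rr_cfg[OF j] r1_def by (simp add: inner_add_left inner_sum_left)
    have ZS: "(\<Sum>j\<in>{1..p}. Z j) = (\<Sum>j\<in>{1..p}. (P j (y1 j) - b j) \<bullet> e j) + (\<Sum>j\<in>{1..p}. r1 \<bullet> adjoint (A j) (e j))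
        + \<sigma> * (\<Sum>j\<in>{1..p}. \<Sum>l\<in>{j<..p}. bt l \<bullet> adjoint (A j) (e j))
        + \<sigma> * (\<Sum>j\<in>{1..p}. Tth \<sigma> E P A j (y1 j - y0 j) \<bullet> e j)"
    proof -
      have "(\<Sum>j\<in>{1..p}. Z j) = (\<Sum>j\<in>{1..p}. (P j (y1 j) - b j) \<bullet> e j + r1 \<bullet> adjoint (A j) (e j)
        + \<sigma> * (\<Sum>l\<in>{j<..p}. bt l \<bullet> adjoint (A j) (e j)) + \<sigma> * (Tth \<sigma> E P A j (y1 j - y0 j) \<bullet> e j))"
        by (rule sum.cong) (simp_all add: Zx)
      thus ?thesis by (simp add: sum.distrib sum_distrib_left)
    qed
    have Uf2: "rr u1 yb \<bullet> adjoint F d = r1 \<bullet> adjoint F d + \<sigma> * (\<Sum>l\<in>{1..p}. bt l \<bullet> adjoint F d)"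
      unfolding rr_yb r1_def by (simp add: inner_add_left inner_sum_left)
    have DL: "Dl u1 y1 d e = (\<Sum>i\<in>{1..p}. (P i (y1 i) - b i) \<bullet> e i) + r1 \<bullet> adjoint F d
        + (\<Sum>i\<in>{1..p}. r1 \<bullet> adjoint (A i) (e i))"
      unfolding Dl_def gam_def r1_def by (simp add: inner_add_right inner_sum_right)
    have L3: "(\<Sum>l\<in>{1..p}. (yb l - y1 l) \<bullet> aa l (d, e)) = (\<Sum>l\<in>{1..p}. bt l \<bullet> adjoint F d)
        + (\<Sum>j\<in>{1..p}. \<Sum>l\<in>{j<..p}. bt l \<bullet> adjoint (A j) (e j))"
    proof -
      have "(\<Sum>l\<in>{1..p}. (yb l - y1 l) \<bullet> aa l (d, e))
          = (\<Sum>l\<in>{1..p}. bt l \<bullet> adjoint F d + (\<Sum>j\<in>{1..<l}. bt l \<bullet> adjoint (A j) (e j)))"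
      proof (rule sum.cong)
        fix l assume l: "l \<in> {1..p}"
        have "(yb l - y1 l) \<bullet> aa l (d, e) = bt l \<bullet> (adjoint F d + (\<Sum>j\<in>{1..<l}. adjoint (A j) (e j)))"
          unfolding aa_def Fi_adj_def bt_def by (simp only: adjoint_clauses(2)[OF linA[OF l]] fst_conv snd_conv)
        thus "(yb l - y1 l) \<bullet> aa l (d, e) = bt l \<bullet> adjoint F d + (\<Sum>j\<in>{1..<l}. bt l \<bullet> adjoint (A j) (e j))"
          by (simp add: inner_add_right inner_sum_right)
      qed simp
      also have "\<dots> = (\<Sum>l\<in>{1..p}. bt l \<bullet> adjoint F d) + (\<Sum>l\<in>{1..p}. \<Sum>j\<in>{1..<l}. bt l \<bullet> adjoint (A j) (e j))"
        by (rule sum.distrib)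
      also have "(\<Sum>l\<in>{1..p}. \<Sum>j\<in>{1..<l}. bt l \<bullet> adjoint (A j) (e j)) = (\<Sum>j\<in>{1..p}. \<Sum>l\<in>{j<..p}. bt l \<bullet> adjoint (A j) (e j))"
        by (rule swap_tri')
      finally show ?thesis .
    qed
    have TT: "(\<Sum>j\<in>{1..p}. Tth \<sigma> E P A j (y1 j - y0 j) \<bullet> e j) = (\<Sum>j\<in>{1..<p}. Tth \<sigma> E P A j (y1 j - y0 j) \<bullet> e j)
        + Tth \<sigma> E P A p (y1 p - y0 p) \<bullet> e p"
    proof -
      have "{1..p} = insert p {1..<p}" using p1 by auto
      thus ?thesis by simp
    qed
    have "f w - f u1 + Dl u1 y1 d e + \<sigma> * Lin + \<sigma> * (Tth \<sigma> E P A p (y1 p - y0 p) \<bullet> e p)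
        = (f w - f u1 + rr u1 yb \<bullet> adjoint F d + \<sigma> * (Tf (u1 - u0) \<bullet> d)) + (\<Sum>j\<in>{1..p}. Z j)"
      unfolding ZS Uf2 DL Lin_def L3 TT by (simp add: algebra_simps)
    thus ?thesis using Uf Z0 by simp
  qed
  have "\<sigma>/2 * (hq (u1 - u0, \<lambda>i. y1 i - y0 i) + 2 * Lin) \<le> \<sigma>/2 * hq (w - u0, \<lambda>i. y' i - y0 i)"
    using HB sig by (simp add: mult_left_mono)
  moreover have "\<sigma>/2 * (qn (Tth \<sigma> E P A p) (y1 p - y0 p) + 2 * (Tth \<sigma> E P A p (y1 p - y0 p) \<bullet> e p))
        \<le> \<sigma>/2 * qn (Tth \<sigma> E P A p) (y' p - y0 p)"
    using QC sig by (simp add: mult_left_mono)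
  ultimately show ?thesis unfolding hatqf_closed LA using LD Cl0 by (simp add: algebra_simps)
qed

end

theorem proposition3p2:
  fixes f :: "'u::euclidean_space \<Rightarrow> real" and domf :: "'u set"
    and g :: "'v::euclidean_space \<Rightarrow> real" and domg :: "'v set"
    and F :: "'x::euclidean_space \<Rightarrow> 'u" and G :: "'x \<Rightarrow> 'v"
    and A :: "nat \<Rightarrow> 'x \<Rightarrow> 'y::euclidean_space" and Y :: "nat \<Rightarrow> 'y set"
    and B :: "nat \<Rightarrow> 'x \<Rightarrow> 'z::euclidean_space" and Z :: "nat \<Rightarrow> 'z set"
    and c :: 'x
    and P E :: "nat \<Rightarrow> 'y \<Rightarrow> 'y" and b :: "nat \<Rightarrow> 'y"
    and Q H :: "nat \<Rightarrow> 'z \<Rightarrow> 'z" and d :: "nat \<Rightarrow> 'z"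
    and Tf :: "'u \<Rightarrow> 'u" and Tg :: "'v \<Rightarrow> 'v"
    and p q :: nat and \<sigma> \<tau> :: real
    and u :: "nat \<Rightarrow> 'u" and y ybar :: "nat \<Rightarrow> nat \<Rightarrow> 'y"
    and v :: "nat \<Rightarrow> 'v" and z zbar :: "nat \<Rightarrow> nat \<Rightarrow> 'z" and x :: "nat \<Rightarrow> 'x"
  defines "L \<equiv> Lagr \<sigma> f g F G A B c P b Q d p q"
  assumes pq: "p \<ge> 1" "q \<ge> 1" and sig: "\<sigma> > 0" and tau: "\<tau> > 0"
    and fconv: "closed_proper_convex f domf" and gconv: "closed_proper_convex g domg"
    and linF: "linear F" and linG: "linear G"
    and Ysub: "\<forall>i\<in>{1..p}. subspace (Y i)" and Zsub: "\<forall>j\<in>{1..q}. subspace (Z j)"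
    and linA: "\<forall>i\<in>{1..p}. linear (A i) \<and> (\<forall>w. A i w \<in> Y i)"
    and linB: "\<forall>j\<in>{1..q}. linear (B j) \<and> (\<forall>w. B j w \<in> Z j)"
    and bY: "\<forall>i\<in>{1..p}. b i \<in> Y i" and dZ: "\<forall>j\<in>{1..q}. d j \<in> Z j"
    and Ppsd: "\<forall>i\<in>{1..p}. sa_psd_on (Y i) (P i)"
    and Qpsd: "\<forall>j\<in>{1..q}. sa_psd_on (Z j) (Q j)"
    and Epd: "\<forall>i\<in>{1..p}. sa_psd_on (Y i) (E i) \<and> (\<forall>a\<in>Y i. a \<noteq> 0 \<longrightarrow> 0 < a \<bullet> E i a)
                 \<and> (\<forall>a\<in>Y i. a \<bullet> ((1/\<sigma>) *\<^sub>R P i a + A i (adjoint (A i) a)) \<le> a \<bullet> E i a)"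
    and Hpd: "\<forall>j\<in>{1..q}. sa_psd_on (Z j) (H j) \<and> (\<forall>a\<in>Z j. a \<noteq> 0 \<longrightarrow> 0 < a \<bullet> H j a)
                 \<and> (\<forall>a\<in>Z j. a \<bullet> ((1/\<sigma>) *\<^sub>R Q j a + B j (adjoint (B j) a)) \<le> a \<bullet> H j a)"
    and Tfpsd: "sa_psd_on UNIV Tf" and Tgpsd: "sa_psd_on UNIV Tg"
    and init: "u 0 \<in> domf" "\<forall>i\<in>{1..p}. y 0 i \<in> Y i" "v 0 \<in> domg" "\<forall>j\<in>{1..q}. z 0 j \<in> Z j"
    and step_ybar: "\<forall>k. \<forall>i\<in>{1..p}. ybar k i \<in> Y i \<and> (\<forall>w\<in>Y i.
         L (u k) (blk (y k) i (ybar k i) (ybar k)) (v k) (z k) (x k)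
           + \<sigma>/2 * qn (Tth \<sigma> E P A i) (ybar k i - y k i)
         \<le> L (u k) (blk (y k) i w (ybar k)) (v k) (z k) (x k)
           + \<sigma>/2 * qn (Tth \<sigma> E P A i) (w - y k i))"
    and step_u: "\<forall>k. u (Suc k) \<in> domf \<and> (\<forall>w\<in>domf.
         L (u (Suc k)) (ybar k) (v k) (z k) (x k) + \<sigma>/2 * qn Tf (u (Suc k) - u k)
         \<le> L w (ybar k) (v k) (z k) (x k) + \<sigma>/2 * qn Tf (w - u k))"
    and step_y: "\<forall>k. \<forall>i\<in>{1..p}. y (Suc k) i \<in> Y i \<and> (\<forall>w\<in>Y i.
         L (u (Suc k)) (blk (y (Suc k)) i (y (Suc k) i) (ybar k)) (v k) (z k) (x k)
           + \<sigma>/2 * qn (Tth \<sigma> E P A i) (y (Suc k) i - y k i)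
         \<le> L (u (Suc k)) (blk (y (Suc k)) i w (ybar k)) (v k) (z k) (x k)
           + \<sigma>/2 * qn (Tth \<sigma> E P A i) (w - y k i))"
    and step_zbar: "\<forall>k. \<forall>j\<in>{1..q}. zbar k j \<in> Z j \<and> (\<forall>w\<in>Z j.
         L (u (Suc k)) (y (Suc k)) (v k) (blk (z k) j (zbar k j) (zbar k)) (x k)
           + \<sigma>/2 * qn (Tth \<sigma> H Q B j) (zbar k j - z k j)
         \<le> L (u (Suc k)) (y (Suc k)) (v k) (blk (z k) j w (zbar k)) (x k)
           + \<sigma>/2 * qn (Tth \<sigma> H Q B j) (w - z k j))"
    and step_v: "\<forall>k. v (Suc k) \<in> domg \<and> (\<forall>w\<in>domg.
         L (u (Suc k)) (y (Suc k)) (v (Suc k)) (zbar k) (x k) + \<sigma>/2 * qn Tg (v (Suc k) - v k)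
         \<le> L (u (Suc k)) (y (Suc k)) w (zbar k) (x k) + \<sigma>/2 * qn Tg (w - v k))"
    and step_z: "\<forall>k. \<forall>j\<in>{1..q}. z (Suc k) j \<in> Z j \<and> (\<forall>w\<in>Z j.
         L (u (Suc k)) (y (Suc k)) (v (Suc k)) (blk (z (Suc k)) j (z (Suc k) j) (zbar k)) (x k)
           + \<sigma>/2 * qn (Tth \<sigma> H Q B j) (z (Suc k) j - z k j)
         \<le> L (u (Suc k)) (y (Suc k)) (v (Suc k)) (blk (z (Suc k)) j w (zbar k)) (x k)
           + \<sigma>/2 * qn (Tth \<sigma> H Q B j) (w - z k j))"
    and step_x: "\<forall>k. x (Suc k) = x k + (\<tau> * \<sigma>) *\<^sub>R Gam F G A B c p q (u (Suc k)) (y (Suc k)) (v (Suc k)) (z (Suc k))"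
  shows "\<forall>k.
     (u (Suc k) \<in> domf \<and> (\<forall>i\<in>{1..p}. y (Suc k) i \<in> Y i) \<and>
      (\<forall>w\<in>domf. \<forall>y'. (\<forall>i\<in>{1..p}. y' i \<in> Y i) \<longrightarrow>
         L (u (Suc k)) (y (Suc k)) (v k) (z k) (x k)
           + \<sigma>/2 * hatqf \<sigma> Tf F A P E Y p (u (Suc k) - u k, \<lambda>i. y (Suc k) i - y k i)
           + \<sigma>/2 * qn (Tth \<sigma> E P A p) (y (Suc k) p - y k p)
         \<le> L w y' (v k) (z k) (x k)
           + \<sigma>/2 * hatqf \<sigma> Tf F A P E Y p (w - u k, \<lambda>i. y' i - y k i)
           + \<sigma>/2 * qn (Tth \<sigma> E P A p) (y' p - y k p)))
   \<and> (v (Suc k) \<in> domg \<and> (\<forall>j\<in>{1..q}. z (Suc k) j \<in> Z j) \<and>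
      (\<forall>w\<in>domg. \<forall>z'. (\<forall>j\<in>{1..q}. z' j \<in> Z j) \<longrightarrow>
         L (u (Suc k)) (y (Suc k)) (v (Suc k)) (z (Suc k)) (x k)
           + \<sigma>/2 * hatqf \<sigma> Tg G B Q H Z q (v (Suc k) - v k, \<lambda>j. z (Suc k) j - z k j)
           + \<sigma>/2 * qn (Tth \<sigma> H Q B q) (z (Suc k) q - z k q)
         \<le> L (u (Suc k)) (y (Suc k)) w z' (x k)
           + \<sigma>/2 * hatqf \<sigma> Tg G B Q H Z q (w - v k, \<lambda>j. z' j - z k j)
           + \<sigma>/2 * qn (Tth \<sigma> H Q B q) (z' q - z k q)))
   \<and> x (Suc k) = x k + (\<tau> * \<sigma>) *\<^sub>R Gam F G A B c p q (u (Suc k)) (y (Suc k)) (v (Suc k)) (z (Suc k))"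
proof (intro allI)
  fix k
  have yY: "\<forall>i\<in>{1..p}. y k i \<in> Y i" using init step_y by (cases k) auto
  have zZ: "\<forall>j\<in>{1..q}. z k j \<in> Z j" using init step_z by (cases k) auto
  have fc: "convex domf" "convex_on domf f" and gc: "convex domg" "convex_on domg g"
    using fconv gconv unfolding closed_proper_convex_def by auto
  define S1 where "S1 = adjoint G (v k) + (\<Sum>j\<in>{1..q}. adjoint (B j) (z k j)) - c"
  define K1 where "K1 = g (v k) + (\<Sum>j\<in>{1..q}. quadlin (Q j) (d j) (z k j))"
  define S2 where "S2 = adjoint F (u (Suc k)) + (\<Sum>i\<in>{1..p}. adjoint (A i) (y (Suc k) i)) - c"
  define K2 where "K2 = f (u (Suc k)) + (\<Sum>i\<in>{1..p}. quadlin (P i) (b i) (y (Suc k) i))"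
  have L1: "L uu yy (v k) (z k) (x k) = f uu + (\<Sum>i\<in>{1..p}. quadlin (P i) (b i) (yy i)) + K1
        + x k \<bullet> (adjoint F uu + (\<Sum>i\<in>{1..p}. adjoint (A i) (yy i)) + S1)
        + \<sigma> / 2 * (norm (adjoint F uu + (\<Sum>i\<in>{1..p}. adjoint (A i) (yy i)) + S1))\<^sup>2" for uu yy
  proof -
    have Geq: "Gam F G A B c p q uu yy (v k) (z k) = adjoint F uu + (\<Sum>i\<in>{1..p}. adjoint (A i) (yy i)) + S1"
      unfolding Gam_def S1_def by (simp add: algebra_simps)
    show ?thesis unfolding L_def Lagr_def Geq K1_def by simp
  qed
  have L2: "L (u (Suc k)) (y (Suc k)) vv zz (x k) = g vv + (\<Sum>j\<in>{1..q}. quadlin (Q j) (d j) (zz j)) + K2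
        + x k \<bullet> (adjoint G vv + (\<Sum>j\<in>{1..q}. adjoint (B j) (zz j)) + S2)
        + \<sigma> / 2 * (norm (adjoint G vv + (\<Sum>j\<in>{1..q}. adjoint (B j) (zz j)) + S2))\<^sup>2" for vv zz
  proof -
    have Geq: "Gam F G A B c p q (u (Suc k)) (y (Suc k)) vv zz = adjoint G vv + (\<Sum>j\<in>{1..q}. adjoint (B j) (zz j)) + S2"
      unfolding Gam_def S2_def by (simp add: algebra_simps)
    show ?thesis unfolding L_def Lagr_def Geq K2_def by (simp add: algebra_simps)
  qed
  have I1: "sgs f domf F A Y P E b Tf p \<sigma> S1 K1 (x k) (\<lambda>uu yy. L uu yy (v k) (z k) (x k))
      (u k) (u (Suc k)) (y k) (y (Suc k)) (ybar k)"
    unfolding sgs_def using pq sig fc linF Ysub linA Ppsd Epd Tfpsd L1 yY step_ybar step_u step_y by (intro conjI; blast)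
  have I2: "sgs g domg G B Z Q H d Tg q \<sigma> S2 K2 (x k) (\<lambda>vv zz. L (u (Suc k)) (y (Suc k)) vv zz (x k))
      (v k) (v (Suc k)) (z k) (z (Suc k)) (zbar k)"
    unfolding sgs_def using pq sig gc linG Zsub linB Qpsd Hpd Tgpsd L2 zZ step_zbar step_v step_z by (intro conjI; blast)
  have u1: "u (Suc k) \<in> domf" using step_u by blast
  have y1: "\<forall>i\<in>{1..p}. y (Suc k) i \<in> Y i" using step_y by blast
  have v1: "v (Suc k) \<in> domg" using step_v by blast
  have z1: "\<forall>j\<in>{1..q}. z (Suc k) j \<in> Z j" using step_z by blast
  show "(u (Suc k) \<in> domf \<and> (\<forall>i\<in>{1..p}. y (Suc k) i \<in> Y i) \<and>
      (\<forall>w\<in>domf. \<forall>y'. (\<forall>i\<in>{1..p}. y' i \<in> Y i) \<longrightarrow>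
         L (u (Suc k)) (y (Suc k)) (v k) (z k) (x k)
           + \<sigma>/2 * hatqf \<sigma> Tf F A P E Y p (u (Suc k) - u k, \<lambda>i. y (Suc k) i - y k i)
           + \<sigma>/2 * qn (Tth \<sigma> E P A p) (y (Suc k) p - y k p)
         \<le> L w y' (v k) (z k) (x k)
           + \<sigma>/2 * hatqf \<sigma> Tf F A P E Y p (w - u k, \<lambda>i. y' i - y k i)
           + \<sigma>/2 * qn (Tth \<sigma> E P A p) (y' p - y k p)))
   \<and> (v (Suc k) \<in> domg \<and> (\<forall>j\<in>{1..q}. z (Suc k) j \<in> Z j) \<and>
      (\<forall>w\<in>domg. \<forall>z'. (\<forall>j\<in>{1..q}. z' j \<in> Z j) \<longrightarrow>
         L (u (Suc k)) (y (Suc k)) (v (Suc k)) (z (Suc k)) (x k)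
           + \<sigma>/2 * hatqf \<sigma> Tg G B Q H Z q (v (Suc k) - v k, \<lambda>j. z (Suc k) j - z k j)
           + \<sigma>/2 * qn (Tth \<sigma> H Q B q) (z (Suc k) q - z k q)
         \<le> L (u (Suc k)) (y (Suc k)) w z' (x k)
           + \<sigma>/2 * hatqf \<sigma> Tg G B Q H Z q (w - v k, \<lambda>j. z' j - z k j)
           + \<sigma>/2 * qn (Tth \<sigma> H Q B q) (z' q - z k q)))
   \<and> x (Suc k) = x k + (\<tau> * \<sigma>) *\<^sub>R Gam F G A B c p q (u (Suc k)) (y (Suc k)) (v (Suc k)) (z (Suc k))"
    using u1 y1 v1 z1 sgs.main_ineq[OF I1] sgs.main_ineq[OF I2] step_x by simp
qed


end
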